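(* Consider a run of Algorithm 3 (described in the context). Fix a hypercube $I_j$ and a run on $I_j$ of length $\zeta$ (number of queries), and suppose that a total of $\xi$ signals were corrupted during this run. Then the pricing rounds of this run incur total pricing loss $L\cdot O(\zeta\eta_0+\xi\tau_0)$, with an absolute constant.
   Context: Problem. Fix $L>0$, $d\ge 1$, horizon $T\ge 2$. An adversary fixes an unknown $f:[0,1]^d\to[0,L]$ with $|f(x)-f(y)|\le L\|x-y\|_\infty$. In each round $t=1,\dots,T$: the adversary chooses $x_t\in[0,1]^d$; the learner observes $x_t$ and posts $q_t$; the adversary observes $q_t$ and sends $\sigma_t\in\{0,1\}$. With $\sigma(u)=1$ if $u>0$, $0$ if $u\le 0$: uncorrupted rounds have $\sigma_t=\sigma(q_t-f(x_t))$, corrupted rounds $\sigma_t=1-\sigma(q_t-f(x_t))$; the adversary chooses adaptively which rounds to corrupt, at most $C$ in total, $C$ unknown to the learner. The pricing loss of round $t$ is $f(x_t)-q_t\cdot\mathbb{1}[q_t\le f(x_t)]$. $\mathtt{len}$ denotes length of an interval and side length of a hypercube. $\mathtt{MidpointQuery}(I,Y)$, $Y=[a,b]$: guess $q=(a+b)/2$; if $\sigma_t=1$ return $Y\cap[0,q+L\,\mathtt{len}(I)]$, if $\sigma_t=0$ return $Y\cap[q-L\,\mathtt{len}(I),\infty)$. Algorithm 3 (parameters $\eta_0=T^{-1/(d+1)}$ and a schedule $\tau_0\ge1$). Uniformly partition $[0,1]^d$ into hypercubes of side length $\Theta(\eta_0)$; each hypercube $I_j$ has range $Y_j$ (initially $[0,L]$)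 and counter $c_j$ (initially $0$). In round $t$, with $I_j\ni x_t$: if $\mathtt{len}(Y_j)<10L\eta_0$ ($I_j$ pricing-ready), set $c_j:=c_j+1$; if $c_j>\tau_0$ guess $\max(Y_j)$ (checking round) and set $c_j:=0$, else guess $\min(Y_j)$ (pricing round). The learner becomes "surprised" when a checking round receives $\sigma_t=0$ or a pricing round receives $\sigma_t=1$; it then sets $Y_j:=[0,L]$, $c_j:=0$. If $I_j$ is not pricing-ready, it performs a searching round $Y_j:=\mathtt{MidpointQuery}(I_j,Y_j)$. Runs. For a fixed hypercube $I_j$, a run is the set of queries (rounds whose context lies in $I_j$) from the start of the algorithm or from the most recent reset of $Y_j$ up to the round in which the learner becomes surprised on $I_j$ (or until the algorithm terminates). Its length is the number of such queries. *)

theory Defs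
  imports Complex_Main
begin

(* Contexts are points of [0,1]^d, represented as functions nat => real whose
   coordinates i >= d are 0. *)
definition cube01 :: "nat \<Rightarrow> (nat \<Rightarrow> real) set" where
  "cube01 d = {p. (\<forall>i<d. 0 \<le> p i \<and> p i \<le> 1) \<and> (\<forall>i\<ge>d. p i = 0)}"

definition supdist :: "nat \<Rightarrow> (nat \<Rightarrow> real) \<Rightarrow> (nat \<Rightarrow> real) \<Rightarrow> real" where
  "supdist d p q = Max ((\<lambda>i. \<bar>p i - q i\<bar>) ` {..<d})"

definition eta0 :: "nat \<Rightarrow> nat \<Rightarrow> real" where
  "eta0 T d = real T powr (- 1 / (real d + 1))"

(* number of cells per axis: m = ceil(1/eta0); cells have side length 1/m = Theta(eta0) *)
definition grid :: "nat \<Rightarrow> nat \<Rightarrow> nat" where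
  "grid T d = nat \<lceil>1 / eta0 T d\<rceil>"

type_synonym cell = "nat \<Rightarrow> nat"

(* the hypercube containing p: index floor(m*p_i), the right boundary 1 belongs to the last cell *)
definition cell_of :: "nat \<Rightarrow> nat \<Rightarrow> (nat \<Rightarrow> real) \<Rightarrow> cell" where
  "cell_of m d p = (\<lambda>i. if i < d then min (m - 1) (nat \<lfloor>real m * p i\<rfloor>) else 0)"

definition sgn01 :: "real \<Rightarrow> bool" where
  "sgn01 u = (u > 0)"

(* MidpointQuery(I,Y) with len(I) = ell, Y = [a,b] *)
definition midpoint_query :: "real \<Rightarrow> real \<Rightarrow> real \<times> real \<Rightarrow> bool \<Rightarrow> real \<times> real" where
  "midpoint_query L ell Y sig =
     (let a = fst Y; b = snd Y; q = (a + b) / 2 in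
      if sig then (max a 0, min b (q + L * ell)) else (max a (q - L * ell), b))"

datatype rkind = Searching | Pricing | Checking

(* learner state: range Y_j and counter c_j for every cell *)
type_synonym lstate = "(cell \<Rightarrow> real \<times> real) \<times> (cell \<Rightarrow> nat)"

definition init_state :: "real \<Rightarrow> lstate" where
  "init_state L = ((\<lambda>_. (0, L)), (\<lambda>_. 0))"

definition round_kind :: "real \<Rightarrow> real \<Rightarrow> real \<Rightarrow> lstate \<Rightarrow> cell \<Rightarrow> rkind" where
  "round_kind L eta tau st j =
     (if snd (fst st j) - fst (fst st j) < 10 * L * eta
      then (if real (snd st j + 1) > tau then Checking else Pricing)
      else Searching)"

definition guess :: "lstate \<Rightarrow> cell \<Rightarrow> rkind \<Rightarrow> real" where
  "guess st j k = (case k of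
      Checking \<Rightarrow> snd (fst st j)
    | Pricing \<Rightarrow> fst (fst st j)
    | Searching \<Rightarrow> (fst (fst st j) + snd (fst st j)) / 2)"

definition surprised_by :: "rkind \<Rightarrow> bool \<Rightarrow> bool" where
  "surprised_by k sig = ((k = Checking \<and> \<not> sig) \<or> (k = Pricing \<and> sig))"

definition update :: "real \<Rightarrow> real \<Rightarrow> lstate \<Rightarrow> cell \<Rightarrow> rkind \<Rightarrow> bool \<Rightarrow> lstate" where
  "update L ell st j k sig = (let Y = fst st; c = snd st in
     (case k of
        Searching \<Rightarrow> (Y(j := midpoint_query L ell (Y j) sig), c)
      | Pricing \<Rightarrow> (if sig then (Y(j := (0, L)), c(j := 0)) else (Y, c(j := c j + 1)))
      | Checking \<Rightarrow> (if sig then (Y, c(j := 0)) else (Y(j := (0, L)), c(j := 0)))))"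

(* An instance: L, d, T, tau0, the valuation f, the realised contexts x t (t = 0..T-1,
   round t here is round t+1 of the paper) and the realised corruption pattern corr t.
   Since the learner is deterministic, every adaptive adversary induces such sequences. *)

definition signal :: "((nat \<Rightarrow> real) \<Rightarrow> real) \<Rightarrow> (nat \<Rightarrow> real) \<Rightarrow> real \<Rightarrow> bool \<Rightarrow> bool" where
  "signal f p q cor = (if cor then \<not> sgn01 (q - f p) else sgn01 (q - f p))"

primrec alg_state :: "real \<Rightarrow> nat \<Rightarrow> nat \<Rightarrow> real \<Rightarrow> ((nat \<Rightarrow> real) \<Rightarrow> real)
    \<Rightarrow> (nat \<Rightarrow> nat \<Rightarrow> real) \<Rightarrow> (nat \<Rightarrow> bool) \<Rightarrow> nat \<Rightarrow> lstate" where
  "alg_state L d T tau f x corr 0 = init_state L"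
| "alg_state L d T tau f x corr (Suc t) =
     (let st = alg_state L d T tau f x corr t;
          m = grid T d;
          j = cell_of m d (x t);
          k = round_kind L (eta0 T d) tau st j;
          q = guess st j k
      in update L (1 / real m) st j k (signal f (x t) q (corr t)))"

definition kind_at :: "real \<Rightarrow> nat \<Rightarrow> nat \<Rightarrow> real \<Rightarrow> ((nat \<Rightarrow> real) \<Rightarrow> real)
    \<Rightarrow> (nat \<Rightarrow> nat \<Rightarrow> real) \<Rightarrow> (nat \<Rightarrow> bool) \<Rightarrow> nat \<Rightarrow> rkind" where
  "kind_at L d T tau f x corr t =
     round_kind L (eta0 T d) tau (alg_state L d T tau f x corr t) (cell_of (grid T d) d (x t))"

definition guess_at :: "real \<Rightarrow> nat \<Rightarrow> nat \<Rightarrow> real \<Rightarrow> ((nat \<Rightarrow> real) \<Rightarrow> real)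
    \<Rightarrow> (nat \<Rightarrow> nat \<Rightarrow> real) \<Rightarrow> (nat \<Rightarrow> bool) \<Rightarrow> nat \<Rightarrow> real" where
  "guess_at L d T tau f x corr t =
     guess (alg_state L d T tau f x corr t) (cell_of (grid T d) d (x t)) (kind_at L d T tau f x corr t)"

definition surprised_at :: "real \<Rightarrow> nat \<Rightarrow> nat \<Rightarrow> real \<Rightarrow> ((nat \<Rightarrow> real) \<Rightarrow> real)
    \<Rightarrow> (nat \<Rightarrow> nat \<Rightarrow> real) \<Rightarrow> (nat \<Rightarrow> bool) \<Rightarrow> nat \<Rightarrow> bool" where
  "surprised_at L d T tau f x corr t =
     surprised_by (kind_at L d T tau f x corr t)
       (signal f (x t) (guess_at L d T tau f x corr t) (corr t))"

definition pricing_loss :: "real \<Rightarrow> real \<Rightarrow> real" where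
  "pricing_loss v q = v - (if q \<le> v then q else 0)"

(* The run on cell j consisting of the queries to j in rounds s..e-1: it starts at the
   beginning of the algorithm or right after a reset of Y_j (surprise on j in round s-1),
   contains no surprise on j except possibly in its last round e-1, and ends with a
   surprise on j in round e-1 or at termination (e = T). *)
definition is_run :: "real \<Rightarrow> nat \<Rightarrow> nat \<Rightarrow> real \<Rightarrow> ((nat \<Rightarrow> real) \<Rightarrow> real)
    \<Rightarrow> (nat \<Rightarrow> nat \<Rightarrow> real) \<Rightarrow> (nat \<Rightarrow> bool) \<Rightarrow> cell \<Rightarrow> nat \<Rightarrow> nat \<Rightarrow> bool" where
  "is_run L d T tau f x corr j s e \<longleftrightarrow>
     s \<le> e \<and> e \<le> T \<and>
     (s = 0 \<or> (cell_of (grid T d) d (x (s - 1)) = j \<and> surprised_at L d T tau f x corr (s - 1))) \<and>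
     (\<forall>t. s \<le> t \<and> t < e \<and> cell_of (grid T d) d (x t) = j \<and> surprised_at L d T tau f x corr t
          \<longrightarrow> t = e - 1) \<and>
     (e = T \<or> (s < e \<and> cell_of (grid T d) d (x (e - 1)) = j \<and> surprised_at L d T tau f x corr (e - 1)))"

definition run_rounds :: "nat \<Rightarrow> nat \<Rightarrow> (nat \<Rightarrow> nat \<Rightarrow> real) \<Rightarrow> cell \<Rightarrow> nat \<Rightarrow> nat \<Rightarrow> nat set" where
  "run_rounds d T x j s e = {t \<in> {s..<e}. cell_of (grid T d) d (x t) = j}"

end

theory Submission
  imports Defs
begin


lemma nf: assumes "k \<le> nat \<lfloor>u\<rfloor>" "0 \<le> (u::real)" shows "real k \<le> u"
proof -
  have "int k \<le> \<lfloor>u\<rfloor>" using assms by (simp add: le_nat_iff)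
  then show ?thesis by (simp add: le_floor_iff)
qed

lemma cell_close:
  assumes "p \<in> cube01 d" "p' \<in> cube01 d" "cell_of m d p = cell_of m d p'" "m \<ge> 1" "i < d"
  shows "\<bar>p i - p' i\<bar> \<le> 1 / real m"
proof -
  have h: "min (m-1) (nat \<lfloor>real m * p i\<rfloor>) = min (m-1) (nat \<lfloor>real m * p' i\<rfloor>)"
    using fun_cong[OF assms(3), of i] assms(5) by (simp add: cell_of_def)
  have b1: "0 \<le> p i" "p i \<le> 1" "0 \<le> p' i" "p' i \<le> 1" using assms(1,2,5) by (auto simp: cube01_def)
  have u0: "0 \<le> real m * p i" "real m * p i \<le> real m" "0 \<le> real m * p' i" "real m * p' i \<le> real m"
    using b1 by (auto simp: mult_left_le)
  have "\<bar>real m * p i - real m * p' i\<bar> \<le> 1"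
  proof (cases "nat \<lfloor>real m * p i\<rfloor> \<ge> m-1 \<and> nat \<lfloor>real m * p' i\<rfloor> \<ge> m-1")
    case True
    then have "real m * p i \<ge> real m - 1" "real m * p' i \<ge> real m - 1"
      using assms(4) nf[of "m-1" "real m * p i"] nf[of "m-1" "real m * p' i"] u0 by (auto simp: of_nat_diff)
    then show ?thesis using u0 by linarith
  next
    case False
    then have "nat \<lfloor>real m * p i\<rfloor> = nat \<lfloor>real m * p' i\<rfloor>" using h by (auto simp: min_def split: if_splits)
    then have "\<lfloor>real m * p i\<rfloor> = \<lfloor>real m * p' i\<rfloor>" using u0 by (metis eq_nat_nat_iff zero_le_floor)
    then show ?thesis by linarith
  qed
  then have "real m * \<bar>p i - p' i\<bar> \<le> 1" by (simp add: abs_mult right_diff_distrib[symmetric])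
  then show ?thesis using assms(4) by (simp add: field_simps)
qed

lemma supdist_close:
  assumes "p \<in> cube01 d" "p' \<in> cube01 d" "cell_of m d p = cell_of m d p'" "m \<ge> 1" "d \<ge> 1"
  shows "supdist d p p' \<le> 1 / real m"
  unfolding supdist_def using assms cell_close[OF assms(1-4)]
  by (subst Max_le_iff) (auto simp: lessThan_empty_iff)

lemma eta_pos: "T \<ge> 2 \<Longrightarrow> eta0 T d > 0"
  by (simp add: eta0_def)

lemma grid_ge: assumes "T \<ge> 2" shows "grid T d \<ge> 1" "1 / real (grid T d) \<le> eta0 T d"
proof -
  have e: "eta0 T d > 0" using eta_pos assms by blast
  have g: "real (grid T d) \<ge> 1 / eta0 T d" unfolding grid_def by linarith
  have "real (grid T d) > 0" using e g by (meson order_less_le_trans zero_less_divide_1_iff)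
  then show "grid T d \<ge> 1" by simp
  show "1 / real (grid T d) \<le> eta0 T d" using e g
    by (simp add: divide_le_eq mult.commute pos_divide_le_eq)
qed



lemma update_other:
  "j' \<noteq> j0 \<Longrightarrow> fst (update L ell st j0 k sig) j' = fst st j' \<and> snd (update L ell st j0 k sig) j' = snd st j'"
  by (cases k) (auto simp: update_def Let_def)

lemma update_same_Y:
  "fst (update L ell st j0 k sig) j0 \<in> {fst st j0, (0, L), midpoint_query L ell (fst st j0) sig}"
  by (cases k) (auto simp: update_def Let_def)

lemma update_ready_Y:
  "k \<noteq> Searching \<Longrightarrow> \<not> surprised_by k sig \<Longrightarrow> fst (update L ell st j0 k sig) j0 = fst st j0"
  by (cases k) (auto simp: update_def Let_def surprised_by_def)

lemma update_surp:
  "surprised_by k sig \<Longrightarrow> fst (update L ell st j0 k sig) j0 = (0, L) \<and> snd (update L ell st j0 k sig) j0 = 0"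
  by (cases k) (auto simp: update_def Let_def surprised_by_def)

lemma update_searching:
  "fst (update L ell st j0 Searching sig) j0 = midpoint_query L ell (fst st j0) sig \<and> snd (update L ell st j0 Searching sig) j0 = snd st j0"
  by (auto simp: update_def Let_def)

lemma update_pricing_c:
  "snd (update L ell st j0 Pricing sig) j0 = (if sig then 0 else snd st j0 + 1)"
  by (auto simp: update_def Let_def)

lemma update_checking_c:
  "snd (update L ell st j0 Checking sig) j0 = 0"
  by (auto simp: update_def Let_def)

lemma surprised_Searching[simp]: "\<not> surprised_by Searching sig"
  by (simp add: surprised_by_def)

locale alg =
  fixes L :: real and d T :: nat and tau :: real and f :: "(nat \<Rightarrow> real) \<Rightarrow> real"
    and x :: "nat \<Rightarrow> nat \<Rightarrow> real" and corr :: "nat \<Rightarrow> bool"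
  assumes Lpos: "L > 0" and d1: "d \<ge> 1" and T2: "T \<ge> 2" and tau1: "tau \<ge> 1"
    and frange: "\<forall>p\<in>cube01 d. 0 \<le> f p \<and> f p \<le> L"
    and flip: "\<forall>p\<in>cube01 d. \<forall>p'\<in>cube01 d. \<bar>f p - f p'\<bar> \<le> L * supdist d p p'"
    and xin: "\<forall>t<T. x t \<in> cube01 d"
begin

abbreviation "m \<equiv> grid T d"
abbreviation "cl p \<equiv> cell_of m d p"
abbreviation "st t \<equiv> alg_state L d T tau f x corr t"
abbreviation "kd t \<equiv> kind_at L d T tau f x corr t"
abbreviation "gs t \<equiv> guess_at L d T tau f x corr t"
abbreviation "sg t \<equiv> signal f (x t) (gs t) (corr t)"
abbreviation "sur t \<equiv> surprised_at L d T tau f x corr t"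

lemma step: "st (Suc t) = update L (1 / real m) (st t) (cl (x t)) (kd t) (sg t)"
  by (simp add: kind_at_def guess_at_def Let_def)

declare alg_state.simps(2)[simp del]

lemma sur_def': "sur t = surprised_by (kd t) (sg t)"
  by (simp add: surprised_at_def)

lemma kd_def': "kd t = round_kind L (eta0 T d) tau (st t) (cl (x t))"
  by (simp add: kind_at_def)

lemma gs_def': "gs t = guess (st t) (cl (x t)) (kd t)"
  by (simp add: guess_at_def)

lemma global_inv: "fst (fst (st t) j') \<ge> 0 \<and> real (snd (st t) j') \<le> tau"
proof (induction t arbitrary: j')
  case 0
  then show ?case using tau1 by (simp add: init_state_def)
next
  case (Suc t)
  show ?case
  proof (cases "j' = cl (x t)")
    case False
    then show ?thesis using Suc.IH[of j'] update_other[OF False] by (simp add: step)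
  next
    case True
    have IH: "fst (fst (st t) j') \<ge> 0" "real (snd (st t) j') \<le> tau" using Suc.IH by auto
    have Y: "fst (fst (st (Suc t)) j') \<ge> 0"
      using update_same_Y[of L "1 / real m" "st t" j' "kd t" "sg t"] IH Lpos True
      by (auto simp: step midpoint_query_def Let_def)
    have C: "real (snd (st (Suc t)) j') \<le> tau"
    proof (cases "kd t")
      case Searching
      then show ?thesis using update_searching IH True by (simp add: step)
    next
      case Pricing
      then have "real (snd (st t) j' + 1) \<le> tau" using True
        by (auto simp: kd_def' round_kind_def split: if_splits)
      then show ?thesis using Pricing True tau1 by (simp add: step update_pricing_c)
    next
      case Checking
      then show ?thesis using True tau1 by (simp add: step update_checking_c)
    qed
    show ?thesis using Y C by simp
  qed
qed

lemma loss_le_L: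
  assumes "0 \<le> a" "0 \<le> v" "v \<le> L" shows "pricing_loss v a \<le> L"
  using assms by (simp add: pricing_loss_def)

lemma cell_lip:
  assumes "t < T" "p \<in> cube01 d" "cl p = cl (x t)"
  shows "\<bar>f p - f (x t)\<bar> \<le> L / real m"
proof -
  have "supdist d p (x t) \<le> 1 / real m"
    using supdist_close[OF assms(2) _ assms(3)] xin assms(1) grid_ge(1)[OF T2] d1 by auto
  then have "L * supdist d p (x t) \<le> L / real m" using Lpos
    by (metis mult_left_mono less_imp_le times_divide_eq_right mult_1_right)
  then show ?thesis using flip assms xin by fastforce
qed

end



lemma update_ready_Y2:
  "k \<noteq> Searching \<Longrightarrow> fst (update L ell st j0 k sig) j0 \<in> {fst st j0, (0, L)}"
  by (cases k) (auto simp: update_def Let_def)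

lemma mid_ok:
  assumes "a \<le> v" "v \<le> b" "0 \<le> v" "\<bar>v - w\<bar> \<le> L * ell" "sig = sgn01 ((a + b) / 2 - w)"
  shows "fst (midpoint_query L ell (a, b) sig) \<le> v \<and> v \<le> snd (midpoint_query L ell (a, b) sig)"
proof -
  have "\<bar>v - w\<bar> \<le> L * ell" by fact
  then have h: "v - w \<le> L * ell" "w - v \<le> L * ell" by (auto simp: abs_le_iff)
  define q where "q = (a + b) / 2"
  have mq: "midpoint_query L ell (a, b) sig = (if 0 < q - w then (max a 0, min b (q + L * ell)) else (max a (q - L * ell), b))"
    unfolding assms(5) midpoint_query_def Let_def sgn01_def q_def by simp
  show ?thesis unfolding mq using assms(1-3) h by (cases "0 < q - w") auto
qed

locale run = alg +
  fixes j :: cell and s e :: nat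
  assumes isrun: "is_run L d T tau f x corr j s e"
begin

abbreviation "Y t \<equiv> fst (st t) j"
abbreviation "c t \<equiv> snd (st t) j"
abbreviation "RR \<equiv> run_rounds d T x j s e"

definition ok :: "nat \<Rightarrow> bool" where
  "ok t \<longleftrightarrow> (\<forall>p\<in>cube01 d. cl p = j \<longrightarrow> fst (Y t) \<le> f p \<and> f p \<le> snd (Y t))"

lemma se: "s \<le> e" and eT: "e \<le> T"
  using isrun by (auto simp: is_run_def)

lemma only_last: "s \<le> t \<Longrightarrow> t < e \<Longrightarrow> cl (x t) = j \<Longrightarrow> sur t \<Longrightarrow> t = e - 1"
  using isrun unfolding is_run_def by blast

lemma start_state: "Y s = (0, L) \<and> c s = 0"
proof (cases "s = 0")
  case True
  then show ?thesis by (simp add: init_state_def)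
next
  case False
  then have h: "cl (x (s - 1)) = j" "sur (s - 1)" using isrun by (auto simp: is_run_def)
  have "s = Suc (s - 1)" using False by simp
  then have "st s = st (Suc (s - 1))" by simp
  then show ?thesis using update_surp[of "kd (s-1)" "sg (s-1)"] h by (simp add: step sur_def')
qed

lemma ok_reset: "Y t = (0, L) \<Longrightarrow> ok t"
  using frange by (auto simp: ok_def)

lemma ok_step:
  assumes "ok t" "t < e" "cl (x t) = j \<Longrightarrow> \<not> corr t"
  shows "ok (Suc t)"
proof (cases "cl (x t) = j")
  case False
  then show ?thesis using assms(1) update_other[of j "cl (x t)"] by (simp add: step ok_def)
next
  case True
  have tT: "t < T" using assms(2) eT by simp
  show ?thesis
  proof (cases "kd t = Searching")
    case False
    then have "Y (Suc t) \<in> {Y t, (0, L)}" using update_ready_Y2[OF False] True by (simp add: step)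
    then show ?thesis using assms(1) frange by (auto simp: ok_def)
  next
    case S: True
    obtain a b where ab: "Y t = (a, b)" by (cases "Y t")
    have Y': "Y (Suc t) = midpoint_query L (1 / real m) (a, b) (sg t)"
      using update_searching True S ab by (simp add: step)
    have g: "gs t = (a + b) / 2" using S True ab by (simp add: gs_def' guess_def)
    have sgt: "sg t = sgn01 ((a + b) / 2 - f (x t))" unfolding signal_def g using assms(3) True by simp
    show ?thesis unfolding ok_def Y'
    proof (intro ballI impI)
      fix p assume p: "p \<in> cube01 d" "cl p = j"
      have l: "\<bar>f p - f (x t)\<bar> \<le> L * (1 / real m)" using cell_lip[OF tT p(1)] p(2) True by simp
      have "a \<le> f p \<and> f p \<le> b" using assms(1) p ab by (auto simp: ok_def)
      then show "fst (midpoint_query L (1 / real m) (a, b) (sg t)) \<le> f p \<and>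
          f p \<le> snd (midpoint_query L (1 / real m) (a, b) (sg t))"
        using mid_ok[OF _ _ _ l sgt] frange p by auto
    qed
  qed
qed

lemma ok_inv:
  "s \<le> t \<Longrightarrow> t \<le> e \<Longrightarrow> (\<forall>u. s \<le> u \<and> u < t \<and> cl (x u) = j \<longrightarrow> \<not> corr u) \<Longrightarrow> ok t"
proof (induction t)
  case 0
  then show ?case using start_state ok_reset by simp
next
  case (Suc t)
  show ?case
  proof (cases "Suc t = s")
    case True
    then show ?thesis using start_state ok_reset by metis
  next
    case False
    then have "s \<le> t" using Suc.prems by simp
    then have "ok t" using Suc by auto
    then show ?thesis using ok_step Suc.prems \<open>s \<le> t\<close> by auto
  qed
qed

lemma RR_iff: "t \<in> RR \<longleftrightarrow> s \<le> t \<and> t < e \<and> cl (x t) = j"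
  by (auto simp: run_rounds_def)

lemma finite_RR: "finite RR"
  by (simp add: run_rounds_def)

lemma kd_j: "cl (x t) = j \<Longrightarrow> kd t = round_kind L (eta0 T d) tau (st t) j"
  by (simp add: kd_def')

lemma ready_iff: "cl (x t) = j \<Longrightarrow> kd t \<noteq> Searching \<longleftrightarrow> snd (Y t) - fst (Y t) < 10 * L * eta0 T d"
  by (simp add: kd_j round_kind_def)

lemma fixedY:
  assumes "t1 \<in> RR" "kd t1 \<noteq> Searching"
  shows "t1 \<le> t \<Longrightarrow> t \<le> e - 1 \<Longrightarrow> Y t = Y t1"
proof (induction t)
  case 0
  then show ?case by simp
next
  case (Suc t)
  show ?case
  proof (cases "t1 = Suc t")
    case True
    then show ?thesis by simp
  next
    case False
    then have t1t: "t1 \<le> t" using Suc.prems by simp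
    then have IH: "Y t = Y t1" using Suc by simp
    have st: "s \<le> t" "t < e - 1" using t1t assms(1) Suc.prems by (auto simp: RR_iff)
    show ?thesis
    proof (cases "cl (x t) = j")
      case False
      then show ?thesis using IH update_other[of j "cl (x t)"] by (simp add: step)
    next
      case True
      have r1: "cl (x t1) = j" using assms(1) by (simp add: RR_iff)
      have "kd t \<noteq> Searching" using ready_iff[OF True] ready_iff[OF r1] IH assms(2) by simp
      moreover have "t < e" using st(2) by simp
      then have "\<not> sur t" using only_last[OF st(1) _ True] st(2) by auto
      ultimately show ?thesis using IH update_ready_Y True by (simp add: step sur_def')
    qed
  qed
qed

lemma card_filter_Suc:
  assumes "s \<le> t"
  shows "card {u \<in> {s..<Suc t}. P u} = card {u \<in> {s..<t}. P u} + (if P t then 1 else 0)"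
proof -
  have "{u \<in> {s..<Suc t}. P u} = (if P t then insert t {u \<in> {s..<t}. P u} else {u \<in> {s..<t}. P u})"
    using assms by (auto simp: less_Suc_eq)
  then show ?thesis by simp
qed

definition Pr :: "nat \<Rightarrow> nat set" where
  "Pr t = {u \<in> {s..<t}. cl (x u) = j \<and> kd u = Pricing}"
definition CU :: "nat \<Rightarrow> nat set" where
  "CU t = {u \<in> {s..<t}. cl (x u) = j \<and> (kd u = Checking \<or> sur u)}"

lemma count_inv: "s \<le> t \<Longrightarrow> real (card (Pr t)) \<le> tau * real (card (CU t)) + real (c t)"
proof (induction t)
  case 0
  then show ?case unfolding Pr_def CU_def by (simp add: init_state_def)
next
  case (Suc t)
  show ?case
  proof (cases "Suc t = s")
    case True
    then show ?thesis by (simp add: Pr_def CU_def)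
  next
    case False
    then have st: "s \<le> t" using Suc.prems by simp
    then have IH: "real (card (Pr t)) \<le> tau * real (card (CU t)) + real (c t)" using Suc.IH by simp
    have P: "card (Pr (Suc t)) = card (Pr t) + (if cl (x t) = j \<and> kd t = Pricing then 1 else 0)"
      unfolding Pr_def by (rule card_filter_Suc[OF st])
    have C: "card (CU (Suc t)) = card (CU t) + (if cl (x t) = j \<and> (kd t = Checking \<or> sur t) then 1 else 0)"
      unfolding CU_def by (rule card_filter_Suc[OF st])
    have cle: "real (c t) \<le> tau" using global_inv by blast
    show ?thesis
    proof (cases "cl (x t) = j")
      case False
      then show ?thesis using IH P C update_other[of j "cl (x t)"] by (simp add: step)
    next
      case True
      show ?thesis
      proof (cases "kd t")
        case Searching
        then show ?thesis using IH P C True update_searching by (simp add: step sur_def')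
      next
        case Pricing
        have cp: "real (c t + 1) \<le> tau" using Pricing True
          by (auto simp: kd_j round_kind_def split: if_splits)
        show ?thesis
        proof (cases "sg t")
          case True2: True
          have "sur t" using Pricing True2 by (simp add: sur_def' surprised_by_def)
          then have "card (CU (Suc t)) = card (CU t) + 1" "c (Suc t) = 0"
              "card (Pr (Suc t)) = card (Pr t) + 1"
            using C P True Pricing True2 by (auto simp: step update_pricing_c)
          then show ?thesis using IH cp by (simp add: algebra_simps)
        next
          case False2: False
          have "\<not> sur t" using Pricing False2 by (simp add: sur_def' surprised_by_def)
          then have "card (CU (Suc t)) = card (CU t)" "c (Suc t) = c t + 1"
              "card (Pr (Suc t)) = card (Pr t) + 1"
            using C P True Pricing False2 by (auto simp: step update_pricing_c)
          then show ?thesis using IH by simp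
        qed
      next
        case Checking
        then have "card (CU (Suc t)) = card (CU t) + 1" "c (Suc t) = 0"
            "card (Pr (Suc t)) = card (Pr t)"
          using C P True by (auto simp: step update_checking_c)
        then show ?thesis using IH cle by (simp add: algebra_simps)
      qed
    qed
  qed
qed

abbreviation "Prs \<equiv> {t \<in> RR. kd t = Pricing}"
abbreviation "Cr \<equiv> {t \<in> RR. corr t}"
abbreviation "eta \<equiv> eta0 T d"

lemma Prs_eq: "Prs = Pr e"
  by (auto simp: Pr_def run_rounds_def)

lemma pricing_facts:
  assumes "t \<in> Prs"
  shows "snd (Y t) - fst (Y t) < 10 * L * eta" "gs t = fst (Y t)" "0 \<le> fst (Y t)"
    "t < T" "x t \<in> cube01 d" "0 \<le> f (x t)" "f (x t) \<le> L" "s \<le> t" "t < e" "cl (x t) = j"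
proof -
  have r: "s \<le> t" "t < e" "cl (x t) = j" "kd t = Pricing" using assms by (auto simp: RR_iff)
  then show "snd (Y t) - fst (Y t) < 10 * L * eta" using ready_iff by fastforce
  show "gs t = fst (Y t)" using r by (simp add: gs_def' guess_def)
  show "0 \<le> fst (Y t)" using global_inv by blast
  show "t < T" using r eT by simp
  then show xc: "x t \<in> cube01 d" using xin by blast
  show "0 \<le> f (x t)" "f (x t) \<le> L" using frange xc by auto
  show "s \<le> t" "t < e" "cl (x t) = j" using r by auto
qed

definition bad :: "nat \<Rightarrow> bool" where
  "bad t \<longleftrightarrow> \<not> (fst (Y t) \<le> f (x t) \<and> f (x t) \<le> snd (Y t) + L / real m)"

lemma Lm: "L / real m \<le> L * eta"
  using grid_ge(2)[OF T2, of d] Lpos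
  by (metis mult_left_mono less_imp_le times_divide_eq_right mult_1_right)

lemma loss_bound:
  assumes "t \<in> Prs"
  shows "pricing_loss (f (x t)) (gs t) \<le> 11 * L * eta + (if bad t then L else 0)"
proof -
  note pf = pricing_facts[OF assms]
  have e0: "0 \<le> L * eta" using mult_pos_pos[OF Lpos eta_pos[OF T2, of d]] by simp
  show ?thesis
  proof (cases "bad t")
    case True
    then show ?thesis using loss_le_L[OF pf(3) pf(6) pf(7)] pf(2) e0 by simp
  next
    case False
    then have "fst (Y t) \<le> f (x t)" "f (x t) \<le> snd (Y t) + L / real m" by (auto simp: bad_def)
    then show ?thesis using pf(1,2) Lm False by (simp add: pricing_loss_def)
  qed
qed

lemma bad_corr:
  assumes "t \<in> Prs" "bad t"
  shows "Cr \<noteq> {}"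
proof
  assume "Cr = {}"
  note pf = pricing_facts[OF assms(1)]
  have "\<forall>u. s \<le> u \<and> u < t \<and> cl (x u) = j \<longrightarrow> \<not> corr u"
  proof (intro allI impI)
    fix u assume "s \<le> u \<and> u < t \<and> cl (x u) = j"
    then have "u \<in> RR" using pf by (auto simp: RR_iff)
    then show "\<not> corr u" using \<open>Cr = {}\<close> by blast
  qed
  then have "ok t" using ok_inv pf by simp
  then have "fst (Y t) \<le> f (x t) \<and> f (x t) \<le> snd (Y t)" using pf by (auto simp: ok_def)
  moreover have "0 \<le> L / real m" using Lpos by simp
  ultimately show False using assms(2) by (auto simp: bad_def)
qed

abbreviation "lt \<equiv> {t \<in> Prs. f (x t) < fst (Y t)}"
abbreviation "vb \<equiv> {t \<in> Prs. f (x t) > snd (Y t) + L / real m}"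

lemma lt_sub: "lt \<subseteq> Cr \<union> {e - 1}"
proof
  fix t assume t: "t \<in> lt"
  have tP: "t \<in> Prs" using t by blast
  note pf = pricing_facts[OF tP]
  have kp: "kd t = Pricing" using t by simp
  show "t \<in> Cr \<union> {e - 1}"
  proof (cases "corr t")
    case True
    then show ?thesis using t by simp
  next
    case False
    then have "sg t" using pf(2) t by (simp add: signal_def sgn01_def)
    then have "sur t" using kp by (simp add: sur_def' surprised_by_def)
    then show ?thesis using only_last pf by simp
  qed
qed

lemma CU_sub:
  assumes tv: "tv \<in> vb"
  shows "CU e \<subseteq> Cr \<union> {e - 1}"
proof
  fix u assume u: "u \<in> CU e"
  have ur: "s \<le> u" "u < e" "cl (x u) = j" "kd u = Checking \<or> sur u" using u by (auto simp: CU_def)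
  show "u \<in> Cr \<union> {e - 1}"
  proof (cases "u = e - 1")
    case True then show ?thesis by simp
  next
    case False
    then have ns: "\<not> sur u" using only_last ur by blast
    then have kc: "kd u = Checking" using ur by simp
    then have sgu: "sg u" using ns by (simp add: sur_def' surprised_by_def)
    have uRR: "u \<in> RR" using ur by (simp add: RR_iff)
    have tvP: "tv \<in> Prs" using tv by simp
    note pf = pricing_facts[OF tvP]
    have tvRR: "tv \<in> RR" using tvP by simp
    have YY: "Y u = Y tv"
    proof (cases "tv \<le> u")
      case True
      show ?thesis using fixedY[OF tvRR _ True] tvP ur by simp
    next
      case False
      then have "u \<le> tv" by simp
      show ?thesis using fixedY[OF uRR _ \<open>u \<le> tv\<close>] kc pf by simp
    qed
    have uT: "u < T" using ur eT by simp
    have "\<bar>f (x u) - f (x tv)\<bar> \<le> L / real m"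
      using cell_lip[OF pf(4), of "x u"] xin uT ur pf by simp
    then have "f (x u) > snd (Y u)" using tv YY by auto
    moreover have "gs u = snd (Y u)" using kc ur by (simp add: gs_def' guess_def)
    ultimately have "\<not> sg u \<or> corr u" by (auto simp: signal_def sgn01_def)
    then have "corr u" using sgu by simp
    then show ?thesis using uRR by simp
  qed
qed

lemma card_vb: "real (card vb) \<le> tau * (real (card Cr) + 2)"
proof (cases "vb = {}")
  case True
  show ?thesis unfolding True using tau1 by simp
next
  case False
  then obtain tv where tv: "tv \<in> vb" by blast
  have fin: "finite Cr" using finite_RR by simp
  have "card (CU e) \<le> card (Cr \<union> {e - 1})"
    using CU_sub[OF tv] fin by (intro card_mono) auto
  also have "\<dots> \<le> card Cr + 1" using card_Un_le[of Cr "{e-1}"] by simp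
  finally have c1: "real (card (CU e)) \<le> real (card Cr) + 1" by linarith
  have "card vb \<le> card Prs" using finite_RR by (intro card_mono) auto
  then have "real (card vb) \<le> real (card (Pr e))" using Prs_eq by simp
  also have "\<dots> \<le> tau * real (card (CU e)) + real (c e)" using count_inv se by simp
  also have "\<dots> \<le> tau * (real (card Cr) + 1) + tau"
    using c1 global_inv[of e j] tau1 by (intro add_mono mult_left_mono) auto
  finally show ?thesis by (simp add: algebra_simps)
qed

lemma card_bad: "real (card {t \<in> Prs. bad t}) \<le> 5 * tau * real (card Cr)"
proof (cases "{t \<in> Prs. bad t} = {}")
  case True
  show ?thesis unfolding True using tau1 by simp
next
  case False
  then have "Cr \<noteq> {}" using bad_corr by blast
  moreover have fin: "finite Cr" using finite_RR by simp
  ultimately have c1: "real (card Cr) \<ge> 1" by (simp add: Suc_leI card_gt_0_iff)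
  have "{t \<in> Prs. bad t} \<subseteq> lt \<union> vb" by (auto simp: bad_def)
  then have "card {t \<in> Prs. bad t} \<le> card (lt \<union> vb)" using finite_RR by (intro card_mono) auto
  also have "\<dots> \<le> card lt + card vb" by (rule card_Un_le)
  finally have h: "real (card {t \<in> Prs. bad t}) \<le> real (card lt) + real (card vb)" by linarith
  have "card lt \<le> card (Cr \<union> {e - 1})" using lt_sub fin by (intro card_mono) auto
  also have "\<dots> \<le> card Cr + 1" using card_Un_le[of Cr "{e-1}"] by simp
  finally have h2: "real (card lt) \<le> real (card Cr) + 1" by linarith
  have a1: "tau * real (card Cr) \<ge> real (card Cr)" using tau1 c1 mult_right_mono[of 1 tau "real (card Cr)"] by simp
  have a2: "tau * real (card Cr) \<ge> tau" using tau1 c1 mult_left_mono[of 1 "real (card Cr)" tau] by simp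
  have a3: "real (card vb) \<le> tau * real (card Cr) + 2 * tau" using card_vb by (simp add: algebra_simps)
  have "real (card {t \<in> Prs. bad t}) \<le> 5 * (tau * real (card Cr))" using h h2 a1 a2 a3 c1 by linarith
  then show ?thesis by (simp add: algebra_simps)
qed

lemma main_bound:
  "(\<Sum>t\<in>Prs. pricing_loss (f (x t)) (gs t)) \<le> 11 * L * (real (card RR) * eta + real (card Cr) * tau)"
proof -
  have finP: "finite Prs" using finite_RR by simp
  have s1: "(\<Sum>t\<in>Prs. pricing_loss (f (x t)) (gs t)) \<le> (\<Sum>t\<in>Prs. 11 * L * eta + (if bad t then L else 0))"
    by (rule sum_mono) (rule loss_bound)
  have s2: "(\<Sum>t\<in>Prs. 11 * L * eta + (if bad t then L else 0)) = real (card Prs) * (11 * L * eta) + (\<Sum>t\<in>Prs. (if bad t then L else 0))"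
    by (simp add: sum.distrib)
  have s3: "(\<Sum>t\<in>Prs. (if bad t then L else 0)) = real (card {t \<in> Prs. bad t}) * L"
    using finP by (simp add: sum.inter_filter[symmetric])
  have "card Prs \<le> card RR" using finite_RR by (intro card_mono) auto
  then have c1: "real (card Prs) \<le> real (card RR)" by simp
  have c0: "0 \<le> 11 * L * eta" using mult_pos_pos[OF Lpos eta_pos[OF T2, of d]] by simp
  have s4: "real (card Prs) * (11 * L * eta) \<le> real (card RR) * (11 * L * eta)"
    using c1 c0 by (rule mult_right_mono)
  have s5: "real (card {t \<in> Prs. bad t}) * L \<le> 5 * tau * real (card Cr) * L"
    using card_bad Lpos by (intro mult_right_mono) auto
  have "5 * tau * real (card Cr) * L \<le> 11 * tau * real (card Cr) * L"
    using tau1 Lpos by (intro mult_right_mono) auto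
  then have "(\<Sum>t\<in>Prs. pricing_loss (f (x t)) (gs t)) \<le> real (card RR) * (11 * L * eta) + 11 * tau * real (card Cr) * L"
    using s1 s2 s3 s4 s5 by linarith
  then show ?thesis by (simp add: algebra_simps)
qed

end

theorem lemma29:
  shows "\<exists>K>0. \<forall>(L::real) (d::nat) (T::nat) (tau0::real) f x corr j s e.
    L > 0 \<longrightarrow> d \<ge> 1 \<longrightarrow> T \<ge> 2 \<longrightarrow> tau0 \<ge> 1 \<longrightarrow>
    (\<forall>p\<in>cube01 d. 0 \<le> f p \<and> f p \<le> L) \<longrightarrow>
    (\<forall>p\<in>cube01 d. \<forall>p'\<in>cube01 d. \<bar>f p - f p'\<bar> \<le> L * supdist d p p') \<longrightarrow>
    (\<forall>t<T. x t \<in> cube01 d) \<longrightarrow>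
    is_run L d T tau0 f x corr j s e \<longrightarrow>
    (\<Sum>t\<in>{t\<in>run_rounds d T x j s e. kind_at L d T tau0 f x corr t = Pricing}.
        pricing_loss (f (x t)) (guess_at L d T tau0 f x corr t))
      \<le> K * L * (real (card (run_rounds d T x j s e)) * eta0 T d
                 + real (card {t\<in>run_rounds d T x j s e. corr t}) * tau0)"
proof (rule exI[of _ 11], intro conjI allI impI)
  show "(11::real) > 0" by simp
next
  fix L :: real and d T :: nat and tau0 :: real and f x corr j s e
  assume a: "L > 0" "d \<ge> 1" "T \<ge> 2" "tau0 \<ge> 1"
    "\<forall>p\<in>cube01 d. 0 \<le> f p \<and> f p \<le> L"
    "\<forall>p\<in>cube01 d. \<forall>p'\<in>cube01 d. \<bar>f p - f p'\<bar> \<le> L * supdist d p p'"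
    "\<forall>t<T. x t \<in> cube01 d" "is_run L d T tau0 f x corr j s e"
  interpret run L d T tau0 f x corr j s e
    using a by unfold_locales auto
  show "(\<Sum>t\<in>{t\<in>run_rounds d T x j s e. kind_at L d T tau0 f x corr t = Pricing}.
        pricing_loss (f (x t)) (guess_at L d T tau0 f x corr t))
      \<le> 11 * L * (real (card (run_rounds d T x j s e)) * eta0 T d
                 + real (card {t\<in>run_rounds d T x j s e. corr t}) * tau0)"
    by (rule main_bound)
qed

end
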